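(* Let $X$ be a real Banach space and $h:X\times X^*\to\mathbb{R}\cup\{\pm\infty\}$ such that $(\mathcal{J}h)(x,x^* )\geq\langle x,x^*\rangle$ for all $(x,x^* )\in X\times X^*$. Then $$P_2(D(\mathcal{J}h))=P_1\big(D(h^* )\cap(X^*\times X)\big)\subseteq\mathrm{cl}_{w*}\,\mathrm{conv}\,P_2(D(h)),$$ $$P_1(D(\mathcal{J}h))=P_2\big(D(h^* )\cap(X^*\times X)\big)\subseteq\mathrm{cl}\,\mathrm{conv}\,P_1(D(h)).$$
   Context: $X$ is identified with its canonical image in $X^{**}$. $P_1,P_2$ are the canonical projections of a Cartesian product onto its factors; $D(f)=\{z\;|\;f(z)<\infty\}$. The conjugate of $h$ is $h^*:X^*\times X^{**}\to\mathbb{R}\cup\{\pm\infty\}$, $h^*(x^*,x^{**})=\sup_{(y,y^* )}\langle y,x^*\rangle+\langle x^{**},y^*\rangle-h(y,y^* )$, and $(\mathcal{J}h)(x,x^* )=h^*(x^*,x)$. $\mathrm{cl}$ is norm closure, $\mathrm{cl}_{w*}$ weak-$*$ closure in $X^*$, $\mathrm{conv}$ convex hull. *)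

theory Defs
  imports "HOL-Analysis.Analysis"
begin

definition canon :: "'a::real_normed_vector \<Rightarrow> (('a \<Rightarrow>\<^sub>L real) \<Rightarrow>\<^sub>L real)" where
  "canon x = Blinfun (\<lambda>f. blinfun_apply f x)"

definition fconj ::
  "('a::real_normed_vector \<times> ('a \<Rightarrow>\<^sub>L real) \<Rightarrow> ereal)
   \<Rightarrow> ('a \<Rightarrow>\<^sub>L real) \<times> (('a \<Rightarrow>\<^sub>L real) \<Rightarrow>\<^sub>L real) \<Rightarrow> ereal" where
  "fconj h = (\<lambda>(xs, xss). SUP yys \<in> UNIV.
      ereal (blinfun_apply xs (fst yys) + blinfun_apply xss (snd yys)) - h yys)"

definition Jop ::
  "('a::real_normed_vector \<times> ('a \<Rightarrow>\<^sub>L real) \<Rightarrow> ereal) \<Rightarrow> 'a \<times> ('a \<Rightarrow>\<^sub>L real) \<Rightarrow> ereal" where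
  "Jop h = (\<lambda>(x, xs). fconj h (xs, canon x))"

definition dom_f :: "('z \<Rightarrow> ereal) \<Rightarrow> 'z set" where
  "dom_f f = {z. f z < \<infinity>}"

text \<open>Weak-* topology on X*: the coarsest topology making all evaluations continuous,
  i.e. the pullback of the product (pointwise) topology on functions.\<close>
definition weak_star_topology :: "('a::real_normed_vector \<Rightarrow>\<^sub>L real) topology" where
  "weak_star_topology = pullback_topology UNIV blinfun_apply euclidean"

end

theory Submission
  imports Defs
begin


definition sublin :: "('v::real_vector \<Rightarrow> real) \<Rightarrow> bool" where
"sublin q \<longleftrightarrow> (\<forall>x y. q (x + y) \<le> q x + q y) \<and> (\<forall>c x. 0 \<le> c \<longrightarrow> q (c *\<^sub>R x) = c * q x)"

lemma sublin_add: "sublin q \<Longrightarrow> q (x + y) \<le> q x + q y" by (simp add: sublin_def)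
lemma sublin_scale: "sublin q \<Longrightarrow> 0 \<le> c \<Longrightarrow> q (c *\<^sub>R x) = c * q x" by (simp add: sublin_def)
lemma sublin_0: "sublin q \<Longrightarrow> q 0 = 0"
  using sublin_scale[of q 0 0] by simp
lemma sublin_neg: "sublin q \<Longrightarrow> - q (- x) \<le> q x"
  using sublin_add[of q x "-x"] sublin_0[of q] by simp

lemma minimal_linear:
  assumes q: "sublin q" and mn: "\<And>q'. sublin q' \<Longrightarrow> (\<forall>y. q' y \<le> q y) \<Longrightarrow> q' = q"
  shows "linear q"
proof -
  have neg: "q (- a) = - q a" for a
  proof -
    define qa where "qa y = Inf {q (y + t *\<^sub>R a) - t * q a | t. t \<ge> 0}" for y
    have bdd: "bdd_below {q (y + t *\<^sub>R a) - t * q a | t. t \<ge> 0}" for y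
    proof (rule bdd_belowI[where m="- q (- y)"], clarify)
      fix t :: real assume "t \<ge> 0"
      have "q (t *\<^sub>R a) \<le> q (y + t *\<^sub>R a) + q (- y)"
        using sublin_add[OF q, of "y + t *\<^sub>R a" "-y"] by simp
      thus "- q (- y) \<le> q (y + t *\<^sub>R a) - t * q a" using sublin_scale[OF q \<open>t\<ge>0\<close>] by simp
    qed
    have le: "qa y \<le> q (y + t *\<^sub>R a) - t * q a" if "t \<ge> 0" for y t
      unfolding qa_def by (rule cInf_lower[OF _ bdd]) (use that in blast)
    have ge: "c \<le> qa y" if "\<And>t. t \<ge> 0 \<Longrightarrow> c \<le> q (y + t *\<^sub>R a) - t * q a" for c y
      unfolding qa_def by (rule cInf_greatest) (use that in auto)
    have "sublin qa"
      unfolding sublin_def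
    proof (intro conjI allI impI)
      fix x y
      have "qa (x + y) - qa y \<le> qa x"
      proof (rule ge)
        fix t1 :: real assume t1: "t1 \<ge> 0"
        have "qa (x + y) - q (x + t1 *\<^sub>R a) + t1 * q a \<le> qa y"
        proof (rule ge)
          fix t2 :: real assume t2: "t2 \<ge> 0"
          have "qa (x + y) \<le> q ((x + y) + (t1 + t2) *\<^sub>R a) - (t1 + t2) * q a"
            using le t1 t2 by simp
          also have "q ((x + y) + (t1 + t2) *\<^sub>R a) \<le> q (x + t1 *\<^sub>R a) + q (y + t2 *\<^sub>R a)"
            using sublin_add[OF q, of "x + t1 *\<^sub>R a" "y + t2 *\<^sub>R a"]
            by (simp add: algebra_simps scaleR_add_left)
          finally show "qa (x + y) - q (x + t1 *\<^sub>R a) + t1 * q a \<le> q (y + t2 *\<^sub>R a) - t2 * q a"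
            by (simp add: algebra_simps)
        qed
        thus "qa (x + y) - qa y \<le> q (x + t1 *\<^sub>R a) - t1 * q a" by simp
      qed
      thus "qa (x + y) \<le> qa x + qa y" by simp
    next
      fix c :: real and x :: 'a assume c: "0 \<le> c"
      show "qa (c *\<^sub>R x) = c * qa x"
      proof (cases "c = 0")
        case True
        have "qa 0 \<le> 0" using le[of 0 0] sublin_0[OF q] by simp
        moreover have "0 \<le> qa 0"
          by (rule ge) (simp add: sublin_scale[OF q])
        ultimately show ?thesis using True by simp
      next
        case False
        with c have cp: "c > 0" by simp
        have 1: "qa (c *\<^sub>R x) / c \<le> qa x"
        proof (rule ge)
          fix t :: real assume t: "t \<ge> 0"
          have "qa (c *\<^sub>R x) \<le> q (c *\<^sub>R x + (c * t) *\<^sub>R a) - (c * t) * q a"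
            using le cp t by simp
          also have "q (c *\<^sub>R x + (c * t) *\<^sub>R a) = c * q (x + t *\<^sub>R a)"
            using sublin_scale[OF q, of c "x + t *\<^sub>R a"] cp by (simp add: scaleR_add_right)
          finally show "qa (c *\<^sub>R x) / c \<le> q (x + t *\<^sub>R a) - t * q a"
            using cp by (simp add: field_simps)
        qed
        have 2: "c * qa x \<le> qa (c *\<^sub>R x)"
        proof (rule ge)
          fix t :: real assume t: "t \<ge> 0"
          have "qa x \<le> q (x + (t / c) *\<^sub>R a) - (t / c) * q a"
            using le[of "t/c" x] cp t by simp
          also have "q (c *\<^sub>R x + t *\<^sub>R a) = c * q (x + (t / c) *\<^sub>R a)"
            using sublin_scale[OF q, of c "x + (t/c) *\<^sub>R a"] cp by (simp add: scaleR_add_right)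
          ultimately show "c * qa x \<le> q (c *\<^sub>R x + t *\<^sub>R a) - t * q a"
            using cp by (simp add: field_simps)
        qed
        from 1 2 cp show ?thesis by (simp add: field_simps)
      qed
    qed
    moreover have "\<forall>y. qa y \<le> q y" using le[of 0] by simp
    ultimately have "qa = q" by (rule mn)
    hence "q (- a) \<le> q (- a + 1 *\<^sub>R a) - 1 * q a" using le[of 1 "-a"] by simp
    hence "q (- a) \<le> - q a" using sublin_0[OF q] by simp
    moreover have "- q a \<le> q (- a)" using sublin_neg[OF q, of a] by simp
    ultimately show ?thesis by simp
  qed
  show ?thesis
  proof (rule linearI)
    fix x y
    have "q (x + y) \<le> q x + q y" by (rule sublin_add[OF q])
    moreover have "q (- x + - y) \<le> q (- x) + q (- y)" by (rule sublin_add[OF q])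
    ultimately show "q (x + y) = q x + q y" using neg[of "x + y"] neg[of x] neg[of y] by simp
  next
    fix c :: real and x
    show "q (c *\<^sub>R x) = c *\<^sub>R q x"
    proof (cases "c \<ge> 0")
      case True thus ?thesis using sublin_scale[OF q] by simp
    next
      case False
      hence "q ((- c) *\<^sub>R (- x)) = (- c) * q (- x)" using sublin_scale[OF q, of "-c" "-x"] by simp
      moreover have "(- c) *\<^sub>R (- x) = c *\<^sub>R x" by simp
      ultimately show ?thesis using neg[of x] by simp
    qed
  qed
qed

definition epi :: "('v \<Rightarrow> real) \<Rightarrow> ('v \<times> real) set" where
  "epi q = {(y, r). q y < r}"

lemma epi_le: "epi q1 \<subseteq> epi q2 \<Longrightarrow> q2 y \<le> q1 y"
proof (rule ccontr)
  assume s: "epi q1 \<subseteq> epi q2" and "\<not> q2 y \<le> q1 y"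
  hence "(y, (q1 y + q2 y) / 2) \<in> epi q1" "(y, (q1 y + q2 y) / 2) \<notin> epi q2"
    by (auto simp: epi_def)
  with s show False by blast
qed

lemma epi_mono: "(\<And>y. q2 y \<le> q1 y) \<Longrightarrow> epi q1 \<subseteq> epi q2"
  by (auto simp: epi_def intro: le_less_trans)

lemma HB_core:
  fixes p :: "'v::real_vector \<Rightarrow> real"
  assumes p: "sublin p"
  shows "\<exists>f. linear f \<and> (\<forall>x. f x \<le> p x)"
proof -
  define A where "A = {epi q | q. sublin q \<and> (\<forall>y. q y \<le> p y)}"
  have "\<exists>M\<in>A. \<forall>X\<in>A. M \<subseteq> X \<longrightarrow> X = M"
  proof (rule subset_Zorn)
    fix C assume ch: "subset.chain A C"
    show "\<exists>U\<in>A. \<forall>X\<in>C. X \<subseteq> U"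
    proof (cases "C = {}")
      case True thus ?thesis using p unfolding A_def by auto
    next
      case False
      define Q where "Q = {q. sublin q \<and> (\<forall>y. q y \<le> p y) \<and> epi q \<in> C}"
      have CQ: "C = epi ` Q"
      proof
        show "epi ` Q \<subseteq> C" unfolding Q_def by blast
        show "C \<subseteq> epi ` Q"
        proof
          fix X assume "X \<in> C"
          with ch have "X \<in> A" unfolding subset_chain_def by blast
          then obtain q where "X = epi q" "sublin q" "\<forall>y. q y \<le> p y" unfolding A_def by blast
          with \<open>X \<in> C\<close> show "X \<in> epi ` Q" unfolding Q_def by blast
        qed
      qed
      with False obtain q0 where q0: "q0 \<in> Q" by auto
      have cmp: "(\<forall>y. q1 y \<le> q2 y) \<or> (\<forall>y. q2 y \<le> q1 y)" if "q1 \<in> Q" "q2 \<in> Q" for q1 q2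
      proof -
        have "epi q1 \<in> C" "epi q2 \<in> C" using that by (auto simp: Q_def)
        hence "epi q1 \<subseteq> epi q2 \<or> epi q2 \<subseteq> epi q1" using ch unfolding subset_chain_def by blast
        thus ?thesis by (meson epi_le)
      qed
      have Qs: "sublin q" "\<And>y. q y \<le> p y" if "q \<in> Q" for q using that by (auto simp: Q_def)
      define qi where "qi y = Inf ((\<lambda>q. q y) ` Q)" for y
      have bdd: "bdd_below ((\<lambda>q. q y) ` Q)" for y
      proof (rule bdd_belowI[where m="- p (- y)"], clarify)
        fix q assume "q \<in> Q"
        thus "- p (- y) \<le> q y" using sublin_neg[OF Qs(1)[of q], of y] Qs(2)[of q "-y"] by linarith
      qed
      have le: "qi y \<le> q y" if "q \<in> Q" for q y
        unfolding qi_def by (rule cInf_lower[OF _ bdd]) (use that in blast)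
      have ge: "c \<le> qi y" if "\<And>q. q \<in> Q \<Longrightarrow> c \<le> q y" for c y
        unfolding qi_def by (rule cInf_greatest) (use that q0 in auto)
      have sq: "sublin qi"
        unfolding sublin_def
      proof (intro conjI allI impI)
        fix x y
        have "qi (x + y) - qi x \<le> qi y"
        proof (rule ge)
          fix q2 assume q2: "q2 \<in> Q"
          have "qi (x + y) - q2 y \<le> qi x"
          proof (rule ge)
            fix q1 assume q1: "q1 \<in> Q"
            have "qi (x + y) \<le> q1 x + q2 y"
            proof (cases "\<forall>z. q1 z \<le> q2 z")
              case True
              have "qi (x + y) \<le> q1 (x + y)" using le q1 by blast
              also have "\<dots> \<le> q1 x + q1 y" using sublin_add[OF Qs(1)[OF q1]] .
              finally show ?thesis using True by (smt (verit))
            next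
              case False
              hence T: "\<forall>z. q2 z \<le> q1 z" using cmp[OF q1 q2] by blast
              have "qi (x + y) \<le> q2 (x + y)" using le q2 by blast
              also have "\<dots> \<le> q2 x + q2 y" using sublin_add[OF Qs(1)[OF q2]] .
              finally show ?thesis using T by (smt (verit))
            qed
            thus "qi (x + y) - q2 y \<le> q1 x" by simp
          qed
          thus "qi (x + y) - qi x \<le> q2 y" by simp
        qed
        thus "qi (x + y) \<le> qi x + qi y" by simp
      next
        fix c :: real and x :: 'v assume c: "0 \<le> c"
        show "qi (c *\<^sub>R x) = c * qi x"
        proof (cases "c = 0")
          case True
          have "qi 0 \<le> 0" using le[OF q0, of 0] sublin_0[OF Qs(1)[OF q0]] by simp
          moreover have "0 \<le> qi 0" by (rule ge) (simp add: sublin_0[OF Qs(1)])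
          ultimately show ?thesis using True by simp
        next
          case False
          with c have cp: "c > 0" by simp
          have 1: "qi (c *\<^sub>R x) / c \<le> qi x"
          proof (rule ge)
            fix q assume q: "q \<in> Q"
            have "qi (c *\<^sub>R x) \<le> q (c *\<^sub>R x)" using le q by blast
            thus "qi (c *\<^sub>R x) / c \<le> q x" using sublin_scale[OF Qs(1)[OF q] c] cp
              by (simp add: field_simps)
          qed
          have 2: "c * qi x \<le> qi (c *\<^sub>R x)"
          proof (rule ge)
            fix q assume q: "q \<in> Q"
            have "qi x \<le> q x" using le q by blast
            thus "c * qi x \<le> q (c *\<^sub>R x)" using sublin_scale[OF Qs(1)[OF q] c] cp
              by simp
          qed
          from 1 2 cp show ?thesis by (simp add: field_simps)
        qed
      qed
      have lp: "\<forall>y. qi y \<le> p y" using le[OF q0] Qs(2)[OF q0] by (meson order_trans)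
      have "epi qi \<in> A" unfolding A_def
        by (rule CollectI, rule exI[of _ qi]) (simp add: sq lp)
      moreover have "\<forall>X\<in>C. X \<subseteq> epi qi"
      proof
        fix X assume "X \<in> C"
        then obtain q where q: "q \<in> Q" "X = epi q" using CQ by blast
        have "epi q \<subseteq> epi qi" by (rule epi_mono) (rule le[OF q(1)])
        thus "X \<subseteq> epi qi" using q(2) by simp
      qed
      ultimately show ?thesis by blast
    qed
  qed
  then obtain q where q: "sublin q" "\<forall>y. q y \<le> p y"
    and mx: "\<forall>X\<in>A. epi q \<subseteq> X \<longrightarrow> X = epi q" unfolding A_def by blast
  have "linear q"
  proof (rule minimal_linear[OF q(1)])
    fix q' assume q': "sublin q'" "\<forall>y. q' y \<le> q y"
    have lp': "\<forall>y. q' y \<le> p y" using q'(2) q(2) by (meson order_trans)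
    have "epi q' \<in> A" unfolding A_def
      by (rule CollectI, rule exI[of _ q']) (simp add: q'(1) lp')
    moreover have "epi q \<subseteq> epi q'" by (rule epi_mono) (use q'(2) in simp)
    ultimately have "epi q' = epi q" using mx by blast
    hence "\<forall>y. q y \<le> q' y" using epi_le[of q' q] by simp
    thus "q' = q" using q'(2) by (simp add: fun_eq_iff order_antisym)
  qed
  thus ?thesis using q by blast
qed

lemma separation:
  fixes N :: "'v::real_vector \<Rightarrow> real" and K :: "'v set"
  assumes Nadd: "\<And>a b. N (a + b) \<le> N a + N b"
    and Nscale: "\<And>c a. N (c *\<^sub>R a) = \<bar>c\<bar> * N a"
    and K: "convex K" "K \<noteq> {}" and d: "d > 0" and dist: "\<And>k. k \<in> K \<Longrightarrow> d \<le> N (k - x)"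
  shows "\<exists>f. linear f \<and> (\<forall>y. f y \<le> N y) \<and> (\<forall>k\<in>K. f k \<le> f x - d)"
proof -
  obtain k0 where k0: "k0 \<in> K" using K(2) by blast
  have N0: "N 0 = 0" using Nscale[of 0 0] by simp
  have Nneg: "N (- a) = N a" for a using Nscale[of "-1" a] by simp
  define p where "p y = Inf {N (y - l *\<^sub>R (k - x)) - l * d | l k. l \<ge> 0 \<and> k \<in> K}" for y
  have bdd: "bdd_below {N (y - l *\<^sub>R (k - x)) - l * d | l k. l \<ge> 0 \<and> k \<in> K}" for y
  proof (rule bdd_belowI[where m="- N y"], clarify)
    fix l :: real and k assume l: "l \<ge> 0" and k: "k \<in> K"
    have "N (l *\<^sub>R (k - x)) \<le> N (- (y - l *\<^sub>R (k - x))) + N y"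
      using Nadd[of "- (y - l *\<^sub>R (k - x))" y] by simp
    moreover have "N (l *\<^sub>R (k - x)) = l * N (k - x)" using Nscale l by simp
    moreover have "l * d \<le> l * N (k - x)" using dist[OF k] l by (simp add: mult_left_mono)
    moreover have "N (- (y - l *\<^sub>R (k - x))) = N (y - l *\<^sub>R (k - x))" by (rule Nneg)
    ultimately show "- N y \<le> N (y - l *\<^sub>R (k - x)) - l * d" by linarith
  qed
  have le: "p y \<le> N (y - l *\<^sub>R (k - x)) - l * d" if "l \<ge> 0" "k \<in> K" for y l k
    unfolding p_def by (rule cInf_lower[OF _ bdd]) (use that in blast)
  have ge: "c \<le> p y" if "\<And>l k. l \<ge> 0 \<Longrightarrow> k \<in> K \<Longrightarrow> c \<le> N (y - l *\<^sub>R (k - x)) - l * d" for c y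
    unfolding p_def by (rule cInf_greatest) (use that k0 in auto)
  have pN: "p y \<le> N y" for y using le[of 0 k0 y] k0 by simp
  have "sublin p"
    unfolding sublin_def
  proof (intro conjI allI impI)
    fix x1 x2
    have "p (x1 + x2) - p x1 \<le> p x2"
    proof (rule ge)
      fix l2 :: real and k2 assume l2: "l2 \<ge> 0" and k2: "k2 \<in> K"
      have "p (x1 + x2) - (N (x2 - l2 *\<^sub>R (k2 - x)) - l2 * d) \<le> p x1"
      proof (rule ge)
        fix l1 :: real and k1 assume l1: "l1 \<ge> 0" and k1: "k1 \<in> K"
        have "p (x1 + x2) \<le> (N (x1 - l1 *\<^sub>R (k1 - x)) - l1 * d) + (N (x2 - l2 *\<^sub>R (k2 - x)) - l2 * d)"
        proof (cases "l1 + l2 = 0")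
          case True
          hence "l1 = 0" "l2 = 0" using l1 l2 by auto
          thus ?thesis using pN[of "x1 + x2"] Nadd[of x1 x2] by simp
        next
          case False
          hence lp: "l1 + l2 > 0" using l1 l2 by simp
          define k where "k = (l1 / (l1 + l2)) *\<^sub>R k1 + (l2 / (l1 + l2)) *\<^sub>R k2"
          have kK: "k \<in> K" unfolding k_def
            by (rule convexD[OF K(1) k1 k2]) (use l1 l2 lp in \<open>auto simp: divide_nonneg_nonneg add_divide_distrib[symmetric]\<close>)
          have "(l1 + l2) *\<^sub>R k = l1 *\<^sub>R k1 + l2 *\<^sub>R k2"
            unfolding k_def using lp by (simp add: scaleR_add_right)
          hence eq: "x1 + x2 - (l1 + l2) *\<^sub>R (k - x) = (x1 - l1 *\<^sub>R (k1 - x)) + (x2 - l2 *\<^sub>R (k2 - x))"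
            by (simp add: algebra_simps)
          have "p (x1 + x2) \<le> N (x1 + x2 - (l1 + l2) *\<^sub>R (k - x)) - (l1 + l2) * d"
            using le[of "l1 + l2" k] lp kK by simp
          also have "\<dots> \<le> (N (x1 - l1 *\<^sub>R (k1 - x)) - l1 * d) + (N (x2 - l2 *\<^sub>R (k2 - x)) - l2 * d)"
            unfolding eq using Nadd[of "x1 - l1 *\<^sub>R (k1 - x)" "x2 - l2 *\<^sub>R (k2 - x)"] by (simp add: algebra_simps)
          finally show ?thesis .
        qed
        thus "p (x1 + x2) - (N (x2 - l2 *\<^sub>R (k2 - x)) - l2 * d) \<le> N (x1 - l1 *\<^sub>R (k1 - x)) - l1 * d" by simp
      qed
      thus "p (x1 + x2) - p x1 \<le> N (x2 - l2 *\<^sub>R (k2 - x)) - l2 * d" by simp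
    qed
    thus "p (x1 + x2) \<le> p x1 + p x2" by simp
  next
    fix c :: real and y :: 'v assume c: "0 \<le> c"
    show "p (c *\<^sub>R y) = c * p y"
    proof (cases "c = 0")
      case True
      have "p 0 \<le> 0" using pN[of 0] N0 by simp
      moreover have "0 \<le> p 0"
      proof (rule ge)
        fix l :: real and k assume l: "l \<ge> 0" and k: "k \<in> K"
        have "N (0 - l *\<^sub>R (k - x)) = l * N (k - x)" using Nneg Nscale l by simp
        moreover have "l * d \<le> l * N (k - x)" using dist[OF k] l by (simp add: mult_left_mono)
        ultimately show "0 \<le> N (0 - l *\<^sub>R (k - x)) - l * d" by simp
      qed
      ultimately show ?thesis using True by simp
    next
      case False
      with c have cp: "c > 0" by simp
      have 1: "p (c *\<^sub>R y) / c \<le> p y"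
      proof (rule ge)
        fix l :: real and k assume l: "l \<ge> 0" and k: "k \<in> K"
        have "p (c *\<^sub>R y) \<le> N (c *\<^sub>R y - (c * l) *\<^sub>R (k - x)) - (c * l) * d"
          using le[of "c * l" k] cp l k by simp
        moreover have "c *\<^sub>R y - (c * l) *\<^sub>R (k - x) = c *\<^sub>R (y - l *\<^sub>R (k - x))"
          by (simp add: algebra_simps)
        moreover have "N (c *\<^sub>R (y - l *\<^sub>R (k - x))) = c * N (y - l *\<^sub>R (k - x))"
          using Nscale[of c] cp by simp
        ultimately have "p (c *\<^sub>R y) \<le> c * (N (y - l *\<^sub>R (k - x)) - l * d)"
          by (simp add: algebra_simps)
        thus "p (c *\<^sub>R y) / c \<le> N (y - l *\<^sub>R (k - x)) - l * d"
          using cp by (simp add: field_simps)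
      qed
      have 2: "c * p y \<le> p (c *\<^sub>R y)"
      proof (rule ge)
        fix l :: real and k assume l: "l \<ge> 0" and k: "k \<in> K"
        have "p y \<le> N (y - (l / c) *\<^sub>R (k - x)) - (l / c) * d"
          using le[of "l / c" k y] cp l k by simp
        moreover have "c *\<^sub>R (y - (l / c) *\<^sub>R (k - x)) = c *\<^sub>R y - l *\<^sub>R (k - x)"
          using cp by (simp add: algebra_simps)
        ultimately show "c * p y \<le> N (c *\<^sub>R y - l *\<^sub>R (k - x)) - l * d"
          using cp Nscale[of c "y - (l / c) *\<^sub>R (k - x)"] by (simp add: field_simps)
      qed
      from 1 2 cp show ?thesis by (simp add: field_simps)
    qed
  qed
  then obtain f where f: "linear f" "\<forall>y. f y \<le> p y" using HB_core by blast
  have "\<forall>y. f y \<le> N y" using f(2) pN order_trans by blast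
  moreover have "\<forall>k\<in>K. f k \<le> f x - d"
  proof
    fix k assume k: "k \<in> K"
    have "f (k - x) \<le> p (k - x)" using f(2) by blast
    also have "\<dots> \<le> N ((k - x) - 1 *\<^sub>R (k - x)) - 1 * d" using le[of 1 k "k - x"] k by simp
    finally show "f k \<le> f x - d" using N0 linear_diff[OF f(1)] by simp
  qed
  ultimately show ?thesis using f(1) by blast
qed



lemma repr_fin:
  fixes e :: "'z \<Rightarrow> 'v::real_vector \<Rightarrow> real"
  assumes "finite Z" and "\<And>z. linear (e z)"
  shows "linear F \<Longrightarrow> (\<And>\<eta>. (\<forall>z\<in>Z. e z \<eta> = 0) \<Longrightarrow> F \<eta> = 0) \<Longrightarrow> \<exists>a. \<forall>\<eta>. F \<eta> = (\<Sum>z\<in>Z. a z * e z \<eta>)"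
  using assms(1)
proof (induction Z arbitrary: F rule: finite_induct)
  case empty thus ?case by auto
next
  case (insert z Z F)
  show ?case
  proof (cases "\<forall>\<eta>. (\<forall>w\<in>Z. e w \<eta> = 0) \<longrightarrow> e z \<eta> = 0")
    case True
    have "\<exists>a. \<forall>\<eta>. F \<eta> = (\<Sum>w\<in>Z. a w * e w \<eta>)"
      by (rule insert.IH[OF insert.prems(1)]) (use insert.prems(2) True in auto)
    then obtain a where a: "\<forall>\<eta>. F \<eta> = (\<Sum>w\<in>Z. a w * e w \<eta>)" by blast
    have "F \<eta> = (\<Sum>w\<in>insert z Z. (a(z := 0)) w * e w \<eta>)" for \<eta>
      using a insert.hyps by (simp add: sum.insert) (rule sum.cong, auto)
    thus ?thesis by blast
  next
    case False
    then obtain \<eta>0 where h0: "\<forall>w\<in>Z. e w \<eta>0 = 0" "e z \<eta>0 \<noteq> 0" by blast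
    define \<eta>1 where "\<eta>1 = (1 / e z \<eta>0) *\<^sub>R \<eta>0"
    have h1: "\<forall>w\<in>Z. e w \<eta>1 = 0" "e z \<eta>1 = 1"
      using h0 linear_scale[OF assms(2)] unfolding \<eta>1_def by auto
    define G where "G \<eta> = F (\<eta> - e z \<eta> *\<^sub>R \<eta>1)" for \<eta>
    have lG: "linear G"
    proof -
      have "linear (\<lambda>\<eta>. \<eta> - e z \<eta> *\<^sub>R \<eta>1)"
        by (rule linearI) (simp_all add: linear_add[OF assms(2)] linear_scale[OF assms(2)] algebra_simps scaleR_add_left)
      thus ?thesis unfolding G_def using linear_compose[OF _ insert.prems(1)] by (simp add: o_def)
    qed
    have "\<exists>a. \<forall>\<eta>. G \<eta> = (\<Sum>w\<in>Z. a w * e w \<eta>)"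
    proof (rule insert.IH[OF lG])
      fix \<eta> assume z0: "\<forall>w\<in>Z. e w \<eta> = 0"
      show "G \<eta> = 0" unfolding G_def
      proof (rule insert.prems(2), intro ballI)
        fix w assume "w \<in> insert z Z"
        thus "e w (\<eta> - e z \<eta> *\<^sub>R \<eta>1) = 0"
          using z0 h1 linear_diff[OF assms(2)] linear_scale[OF assms(2)] by auto
      qed
    qed
    then obtain a where a: "\<forall>\<eta>. G \<eta> = (\<Sum>w\<in>Z. a w * e w \<eta>)" by blast
    have "F \<eta> = (\<Sum>w\<in>insert z Z. (a(z := F \<eta>1)) w * e w \<eta>)" for \<eta>
    proof -
      have "F \<eta> = G \<eta> + e z \<eta> * F \<eta>1"
        unfolding G_def using linear_diff[OF insert.prems(1)] linear_scale[OF insert.prems(1)] by simp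
      also have "G \<eta> = (\<Sum>w\<in>Z. (a(z := F \<eta>1)) w * e w \<eta>)"
        using a insert.hyps by (auto intro: sum.cong)
      finally show ?thesis using insert.hyps by (simp add: sum.insert)
    qed
    thus ?thesis by blast
  qed
qed

lemma fun_nbhd:
  fixes U :: "('a \<Rightarrow> real) set"
  assumes "open U" "g \<in> U"
  shows "\<exists>Z \<epsilon>. finite Z \<and> \<epsilon> > 0 \<and> (\<forall>g'. (\<forall>z\<in>Z. \<bar>g' z - g z\<bar> < \<epsilon>) \<longrightarrow> g' \<in> U)"
proof -
  have "openin (product_topology (\<lambda>i. euclidean) UNIV) U" "g \<in> U"
    using assms unfolding open_fun_def by auto
  with product_topology_open_contains_basis[OF this]
  have "\<exists>X. g \<in> (\<Pi>\<^sub>E i\<in>UNIV. X i) \<and> (\<forall>i. open (X i)) \<and> finite {i. X i \<noteq> UNIV} \<and> (\<Pi>\<^sub>E i\<in>UNIV. X i) \<subseteq> U"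
    by simp
  then obtain X where H: "g \<in> (\<Pi>\<^sub>E i\<in>UNIV. X i)" "\<And>i. open (X i)"
      "finite {i. X i \<noteq> UNIV}" "(\<Pi>\<^sub>E i\<in>UNIV. X i) \<subseteq> U" by auto
  define Z where "Z = {i. X i \<noteq> UNIV}"
  have "\<forall>i. \<exists>e>0. \<forall>y. \<bar>y - g i\<bar> < e \<longrightarrow> y \<in> X i"
  proof
    fix i
    have "g i \<in> X i" using H(1) by auto
    with H(2)[of i] obtain e where "e > 0" "ball (g i) e \<subseteq> X i" by (meson openE)
    moreover have "y \<in> ball (g i) e" if "\<bar>y - g i\<bar> < e" for y
      using that by (simp add: dist_real_def abs_minus_commute)
    ultimately show "\<exists>e>0. \<forall>y. \<bar>y - g i\<bar> < e \<longrightarrow> y \<in> X i" by blast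
  qed
  then obtain e where e: "\<And>i. e i > 0" "\<And>i y. \<bar>y - g i\<bar> < e i \<Longrightarrow> y \<in> X i" by metis
  define \<epsilon> where "\<epsilon> = Min (insert 1 (e ` Z))"
  have fz: "finite Z" using H(3) Z_def by simp
  have ep: "\<epsilon> > 0" unfolding \<epsilon>_def using fz e(1) by (subst Min_gr_iff) auto
  have epl: "\<epsilon> \<le> e i" if "i \<in> Z" for i unfolding \<epsilon>_def using fz that by (intro Min_le) auto
  have "g' \<in> U" if "\<forall>z\<in>Z. \<bar>g' z - g z\<bar> < \<epsilon>" for g'
  proof -
    have "g' \<in> (\<Pi>\<^sub>E i\<in>UNIV. X i)"
    proof (auto)
      fix i show "g' i \<in> X i"
      proof (cases "i \<in> Z")
        case True thus ?thesis using that epl e(2) by (meson less_le_trans)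
      next
        case False thus ?thesis by (simp add: Z_def)
      qed
    qed
    thus ?thesis using H(4) by blast
  qed
  thus ?thesis using fz ep by blast
qed



lemma canon_apply: "blinfun_apply (canon x) f = blinfun_apply f x"
  unfolding canon_def
  by (subst bounded_linear_Blinfun_apply)
     (rule bounded_bilinear.bounded_linear_left[OF bounded_bilinear_blinfun_apply], simp)

lemma Jop_eq: "Jop h (x, xs) = (SUP yys\<in>UNIV. ereal (blinfun_apply xs (fst yys) + blinfun_apply (snd yys) x) - h yys)"
  by (simp add: Jop_def fconj_def canon_apply)

lemma ereal_shift: "ereal (a + b) - c = (ereal a - c) + ereal b"
  by (cases c) auto

lemma sup_bound:
  fixes h :: "'p \<Rightarrow> ereal" and g0 g1 :: "'p \<Rightarrow> real"
  assumes t: "t \<ge> 0" and B: "\<And>p. h p < \<infinity> \<Longrightarrow> g1 p \<le> B"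
  shows "(SUP p\<in>UNIV. ereal (g0 p + t * g1 p) - h p) \<le> (SUP p\<in>UNIV. ereal (g0 p) - h p) + ereal (t * B)"
proof (rule SUP_least)
  fix p :: 'p
  show "ereal (g0 p + t * g1 p) - h p \<le> (SUP p\<in>UNIV. ereal (g0 p) - h p) + ereal (t * B)"
  proof (cases "h p = \<infinity>")
    case True thus ?thesis by simp
  next
    case False
    hence "g1 p \<le> B" using B by (simp add: top.not_eq_extremum)
    hence tb: "t * g1 p \<le> t * B" using t by (simp add: mult_left_mono)
    have "ereal (g0 p + t * g1 p) - h p = (ereal (g0 p) - h p) + ereal (t * g1 p)" by (rule ereal_shift)
    also have "\<dots> \<le> (SUP p\<in>UNIV. ereal (g0 p) - h p) + ereal (t * B)"
      by (rule add_mono) (auto intro: SUP_upper simp: tb)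
    finally show ?thesis .
  qed
qed

lemma growth_contra:
  assumes J: "J < \<infinity>" and d: "d > 0"
    and g: "\<And>t. t \<ge> 0 \<Longrightarrow> ereal (a + t * b) \<le> J + ereal (t * (b - d))"
  shows False
proof -
  have "ereal a \<le> J" using g[of 0] by simp
  with J obtain j where j: "J = ereal j" by (cases J) auto
  define t where "t = (\<bar>j - a\<bar> + 1) / d"
  have t0: "t \<ge> 0" using d by (simp add: t_def)
  have "a + t * b \<le> j + t * (b - d)" using g[OF t0] j by simp
  hence "t * d \<le> j - a" by (simp add: algebra_simps)
  moreover have "t * d = \<bar>j - a\<bar> + 1" using d by (simp add: t_def)
  ultimately show False by linarith
qed

lemma Jop_empty:
  assumes "dom_f h = {}"
  shows "Jop h (x, xs) = - \<infinity>"
proof -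
  have "h p = \<infinity>" for p using assms by (cases p) (auto simp: dom_f_def top.not_eq_extremum)
  thus ?thesis by (simp add: Jop_eq)
qed

theorem lemma3p2:
  fixes h :: "'a::banach \<times> ('a \<Rightarrow>\<^sub>L real) \<Rightarrow> ereal"
  assumes "\<And>x xs. Jop h (x, xs) \<ge> ereal (blinfun_apply xs x)"
  shows "snd ` dom_f (Jop h) = fst ` (dom_f (fconj h) \<inter> (UNIV \<times> range canon))
         \<and> snd ` dom_f (Jop h) \<subseteq> weak_star_topology closure_of (convex hull (snd ` dom_f h))
         \<and> canon ` (fst ` dom_f (Jop h)) = snd ` (dom_f (fconj h) \<inter> (UNIV \<times> range canon))
         \<and> fst ` dom_f (Jop h) \<subseteq> closure (convex hull (fst ` dom_f h))"
proof (intro conjI)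
  have nonemp: "dom_f h \<noteq> {}"
  proof
    assume "dom_f h = {}"
    hence "Jop h (0, 0) = - \<infinity>" by (rule Jop_empty)
    with assms[of 0 0] show False by simp
  qed
  show "snd ` dom_f (Jop h) = fst ` (dom_f (fconj h) \<inter> (UNIV \<times> range canon))"
    by (force simp: dom_f_def Jop_def image_iff)
  show "canon ` (fst ` dom_f (Jop h)) = snd ` (dom_f (fconj h) \<inter> (UNIV \<times> range canon))"
    by (force simp: dom_f_def Jop_def image_iff)
  show "fst ` dom_f (Jop h) \<subseteq> closure (convex hull (fst ` dom_f h))"
  proof
    fix x assume "x \<in> fst ` dom_f (Jop h)"
    then obtain xs where J: "Jop h (x, xs) < \<infinity>" by (force simp: dom_f_def)
    show "x \<in> closure (convex hull (fst ` dom_f h))"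
    proof (rule ccontr)
      define K where "K = convex hull (fst ` dom_f h)"
      assume "x \<notin> closure (convex hull (fst ` dom_f h))"
      then obtain e where e: "e > 0" "\<And>y. y \<in> K \<Longrightarrow> e \<le> norm (y - x)"
        unfolding closure_approachable K_def dist_norm by (meson not_less)
      have K: "convex K" "K \<noteq> {}" using nonemp unfolding K_def by auto
      obtain f where f: "linear f" "\<forall>y. f y \<le> norm y" "\<forall>k\<in>K. f k \<le> f x - e"
        using separation[of norm K e x] K e norm_triangle_ineq by auto
      have bl: "bounded_linear f"
      proof (rule bounded_linear_intro[where K=1])
        show "f (a + b) = f a + f b" for a b using linear_add[OF f(1)] .
        show "f (r *\<^sub>R a) = r *\<^sub>R f a" for r a using linear_scale[OF f(1)] .
        fix y
        have "f y \<le> norm y" "f (- y) \<le> norm (- y)" using f(2) by blast+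
        thus "norm (f y) \<le> norm y * 1" using linear_neg[OF f(1)] by simp
      qed
      define F where "F = Blinfun f"
      have Fa: "blinfun_apply F = f" unfolding F_def using bl by (rule bounded_linear_Blinfun_apply)
      show False
      proof (rule growth_contra[OF J e(1)])
        fix t :: real assume t: "t \<ge> 0"
        have "ereal (blinfun_apply xs x + t * f x) = ereal (blinfun_apply (xs + t *\<^sub>R F) x)"
          by (simp add: blinfun.add_left blinfun.scaleR_left Fa)
        also have "\<dots> \<le> Jop h (x, xs + t *\<^sub>R F)" by (rule assms)
        also have "\<dots> = (SUP p\<in>UNIV. ereal ((blinfun_apply xs (fst p) + blinfun_apply (snd p) x) + t * f (fst p)) - h p)"
          unfolding Jop_eq by (simp add: blinfun.add_left blinfun.scaleR_left Fa algebra_simps)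
        also have "\<dots> \<le> Jop h (x, xs) + ereal (t * (f x - e))"
          unfolding Jop_eq
        proof (rule sup_bound[OF t])
          fix p assume "h p < \<infinity>"
          hence "fst p \<in> K" unfolding K_def dom_f_def by (auto intro: hull_inc)
          thus "f (fst p) \<le> f x - e" using f(3) by blast
        qed
        finally show "ereal (blinfun_apply xs x + t * f x) \<le> Jop h (x, xs) + ereal (t * (f x - e))" .
      qed
    qed
  qed
  show "snd ` dom_f (Jop h) \<subseteq> weak_star_topology closure_of (convex hull (snd ` dom_f h))"
  proof
    fix xs assume "xs \<in> snd ` dom_f (Jop h)"
    then obtain x where J: "Jop h (x, xs) < \<infinity>" by (force simp: dom_f_def)
    define K where "K = convex hull (snd ` dom_f h)"
    show "xs \<in> weak_star_topology closure_of K"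
    proof (rule ccontr)
      assume "xs \<notin> weak_star_topology closure_of K"
      then obtain T where T: "xs \<in> T" "openin weak_star_topology T" "\<forall>y\<in>K. y \<notin> T"
        unfolding in_closure_of weak_star_topology_def topspace_pullback_topology by auto
      then obtain U where U: "open U" "T = blinfun_apply -` U"
        unfolding weak_star_topology_def openin_pullback_topology by auto
      obtain Z \<epsilon> where Z: "finite Z" "\<epsilon> > 0"
        "\<And>g'. (\<forall>z\<in>Z. \<bar>g' z - blinfun_apply xs z\<bar> < \<epsilon>) \<Longrightarrow> g' \<in> U"
        using fun_nbhd[OF U(1), of "blinfun_apply xs"] T(1) U(2) by blast
      define N where "N \<eta> = (\<Sum>z\<in>Z. \<bar>blinfun_apply \<eta> z\<bar>)" for \<eta> :: "'a \<Rightarrow>\<^sub>L real"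
      have Nadd: "N (a + b) \<le> N a + N b" for a b
        unfolding N_def sum.distrib[symmetric] by (rule sum_mono) (simp add: blinfun.add_left abs_triangle_ineq)
      have Nscale: "N (c *\<^sub>R a) = \<bar>c\<bar> * N a" for c a
        unfolding N_def by (simp add: blinfun.scaleR_left abs_mult sum_distrib_left)
      have dist: "\<epsilon> \<le> N (k - xs)" if k: "k \<in> K" for k
      proof (rule ccontr)
        assume "\<not> \<epsilon> \<le> N (k - xs)"
        hence "\<forall>z\<in>Z. \<bar>blinfun_apply k z - blinfun_apply xs z\<bar> < \<epsilon>"
        proof (intro ballI)
          fix z assume "z \<in> Z" "\<not> \<epsilon> \<le> N (k - xs)"
          hence "\<bar>blinfun_apply (k - xs) z\<bar> \<le> N (k - xs)" unfolding N_def
            using Z(1) by (intro member_le_sum) auto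
          thus "\<bar>blinfun_apply k z - blinfun_apply xs z\<bar> < \<epsilon>"
            using \<open>\<not> \<epsilon> \<le> N (k - xs)\<close> by (simp add: blinfun.diff_left)
        qed
        hence "k \<in> T" using Z(3) U(2) by blast
        thus False using T(3) k by blast
      qed
      have nemp: "dom_f h \<noteq> {}" by (rule nonemp)
      have K: "convex K" "K \<noteq> {}" using nemp unfolding K_def by auto
      obtain Fl where Fl: "linear Fl" "\<forall>y. Fl y \<le> N y" "\<forall>k\<in>K. Fl k \<le> Fl xs - \<epsilon>"
        using separation[of N K \<epsilon> xs, OF Nadd Nscale K Z(2) dist] by blast
      have lin_e: "linear (\<lambda>\<eta>. blinfun_apply \<eta> z)" for z :: 'a
        by (rule linearI) (simp_all add: blinfun.add_left blinfun.scaleR_left)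
      have "\<exists>a. \<forall>\<eta>. Fl \<eta> = (\<Sum>z\<in>Z. a z * blinfun_apply \<eta> z)"
      proof (rule repr_fin[OF Z(1) lin_e Fl(1)])
        fix \<eta> :: "'a \<Rightarrow>\<^sub>L real" assume z0: "\<forall>z\<in>Z. blinfun_apply \<eta> z = 0"
        have "N \<eta> = 0" "N (- \<eta>) = 0" using z0 by (simp_all add: N_def blinfun.minus_left)
        hence "Fl \<eta> \<le> 0" "Fl (- \<eta>) \<le> 0" using Fl(2) by (metis)+
        thus "Fl \<eta> = 0" using linear_neg[OF Fl(1)] by simp
      qed
      then obtain a where a: "\<And>\<eta>. Fl \<eta> = (\<Sum>z\<in>Z. a z * blinfun_apply \<eta> z)" by blast
      define x0 where "x0 = (\<Sum>z\<in>Z. a z *\<^sub>R z)"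
      have Fx0: "Fl \<eta> = blinfun_apply \<eta> x0" for \<eta>
        unfolding a x0_def by (simp add: blinfun.sum_right blinfun.scaleR_right)
      show False
      proof (rule growth_contra[OF J Z(2)])
        fix t :: real assume t: "t \<ge> 0"
        have "ereal (blinfun_apply xs x + t * blinfun_apply xs x0) = ereal (blinfun_apply xs (x + t *\<^sub>R x0))"
          by (simp add: blinfun.add_right blinfun.scaleR_right)
        also have "\<dots> \<le> Jop h (x + t *\<^sub>R x0, xs)" by (rule assms)
        also have "\<dots> = (SUP p\<in>UNIV. ereal ((blinfun_apply xs (fst p) + blinfun_apply (snd p) x) + t * blinfun_apply (snd p) x0) - h p)"
          unfolding Jop_eq by (simp add: blinfun.add_right blinfun.scaleR_right algebra_simps)
        also have "\<dots> \<le> Jop h (x, xs) + ereal (t * (blinfun_apply xs x0 - \<epsilon>))"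
          unfolding Jop_eq
        proof (rule sup_bound[OF t])
          fix p assume "h p < \<infinity>"
          hence "snd p \<in> K" unfolding K_def dom_f_def by (auto intro: hull_inc)
          thus "blinfun_apply (snd p) x0 \<le> blinfun_apply xs x0 - \<epsilon>" using Fl(3) Fx0 by metis
        qed
        finally show "ereal (blinfun_apply xs x + t * blinfun_apply xs x0) \<le> Jop h (x, xs) + ereal (t * (blinfun_apply xs x0 - \<epsilon>))" .
      qed
    qed
  qed
qed

end
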